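(* With the Riccati operator $\mathscr R$ and the RADI iterates $X_1,X_2$, residual factors $R_1,R_2\in\mathbb{R}^{d\times r}$, inner factor $T$ and $\tilde Y_2$ as in the context, suppose $T$ is positive semi-definite. Let $\gamma_1,\gamma_2\in\mathbb{R}$ with $\gamma_1+\gamma_2=1$. Then the residual of the two-term extrapolant, $$\mathscr R(\gamma_1X_1+\gamma_2X_2)=[\,R_1\ R_2\,]\,\mathscr H_2\,[\,R_1\ R_2\,]^{\mathsf T},\qquad \mathscr H_2=\begin{bmatrix}\gamma_1^2T+\gamma_1\gamma_2\tilde Y_2 & \gamma_1\gamma_2(T-\tilde Y_2)\\ \gamma_1\gamma_2(T-\tilde Y_2) & \gamma_2^2T+\gamma_1\gamma_2\tilde Y_2\end{bmatrix},$$ is positive semi-definite if and only if $0\le\gamma_1,\gamma_2\le1$.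
   Context: Data: $A,E\in\mathbb{R}^{d\times d}$, $B\in\mathbb{R}^{d\times p}$, $C\in\mathbb{R}^{q\times d}$, $H\in\mathbb{R}^{p\times p}$ symmetric positive definite, and $\mathscr R(X)=A^{\mathsf T}XE+E^{\mathsf T}XA+C^{\mathsf T}C-E^{\mathsf T}XBH^{-1}B^{\mathsf T}XE$. RADI step: start from $X_1$ with $\mathscr R(X_1)=R_1TR_1^{\mathsf T}$, $R_1\in\mathbb{R}^{d\times r}$, $T=T^{\mathsf T}\in\mathbb{R}^{r\times r}$; with a shift $\sigma_1<0$ set $V_2=\sqrt{-2\sigma_1}(A^{\mathsf T}-E^{\mathsf T}X_1BH^{-1}B^{\mathsf T}+\sigma_1E^{\mathsf T})^{-1}R_1T$, $\tilde Y_2=T-\frac{1}{2\sigma_1}(V_2^{\mathsf T}B)H^{-1}(V_2^{\mathsf T}B)^{\mathsf T}$, $X_2=X_1+V_2\tilde Y_2^{-1}V_2^{\mathsf T}$, $R_2=R_1+\sqrt{-2\sigma_1}E^{\mathsf T}V_2\tilde Y_2^{-1}$ (inverses assumed to exist); then $\mathscr R(X_2)=R_2TR_2^{\mathsf T}$. The displayed factorization with $\mathscr H_2$ (using $\gamma_2-\gamma_2^2=\gamma_1\gamma_2$) holds for all $\gamma_1+\gamma_2=1$. *)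

theory Defs
  imports "HOL-Analysis.Analysis"
begin

definition riccati ::
  "real^'d^'d \<Rightarrow> real^'d^'d \<Rightarrow> real^'p^'d \<Rightarrow> real^'d^'q \<Rightarrow> real^'p^'p \<Rightarrow> real^'d^'d \<Rightarrow> real^'d^'d" where
  "riccati A E B C H X =
     transpose A ** X ** E + transpose E ** X ** A + transpose C ** C
     - transpose E ** X ** B ** matrix_inv H ** transpose B ** X ** E"

definition sym_mat :: "real^'n^'n \<Rightarrow> bool" where
  "sym_mat M \<longleftrightarrow> transpose M = M"

definition psd :: "real^'n^'n \<Rightarrow> bool" where
  "psd M \<longleftrightarrow> sym_mat M \<and> (\<forall>x. 0 \<le> x \<bullet> (M *v x))"

definition pd :: "real^'n^'n \<Rightarrow> bool" where
  "pd M \<longleftrightarrow> sym_mat M \<and> (\<forall>x. x \<noteq> 0 \<longrightarrow> 0 < x \<bullet> (M *v x))"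

definition hcat :: "real^'r^'d \<Rightarrow> real^'s^'d \<Rightarrow> real^('r + 's)^'d" where
  "hcat P Q = (\<chi> i j. case j of Inl k \<Rightarrow> P $ i $ k | Inr k \<Rightarrow> Q $ i $ k)"

definition block2 ::
  "real^'r^'r \<Rightarrow> real^'s^'r \<Rightarrow> real^'r^'s \<Rightarrow> real^'s^'s \<Rightarrow> real^('r + 's)^('r + 's)" where
  "block2 M11 M12 M21 M22 = (\<chi> i j. case i of
       Inl a \<Rightarrow> (case j of Inl b \<Rightarrow> M11 $ a $ b | Inr b \<Rightarrow> M12 $ a $ b)
     | Inr a \<Rightarrow> (case j of Inl b \<Rightarrow> M21 $ a $ b | Inr b \<Rightarrow> M22 $ a $ b))"

end

theory Submission imports Defs begin
lemma mm_radd: "((A::real^'n^'m) + B) ** (C::real^'k^'n) = A ** C + B ** C"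
  by (simp add: matrix_matrix_mult_def vec_eq_iff sum.distrib distrib_right)
lemma mm_rdiff: "((A::real^'n^'m) - B) ** (C::real^'k^'n) = A ** C - B ** C"
  by (simp add: matrix_matrix_mult_def vec_eq_iff sum_subtractf left_diff_distrib)
lemma mm_ldiff: "(A::real^'n^'m) ** ((B::real^'k^'n) - C) = A ** B - A ** C"
  by (simp add: matrix_matrix_mult_def vec_eq_iff sum_subtractf right_diff_distrib)
lemma mm_rscale: "(k *\<^sub>R (A::real^'n^'m)) ** (C::real^'k^'n) = k *\<^sub>R (A ** C)"
  by (simp add: matrix_matrix_mult_def vec_eq_iff sum_distrib_left mult.assoc)
lemma mm_lscale: "(A::real^'n^'m) ** (k *\<^sub>R (C::real^'k^'n)) = k *\<^sub>R (A ** C)"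
  by (simp add: matrix_matrix_mult_def vec_eq_iff sum_distrib_left algebra_simps)
lemma tr_add: "transpose ((A::real^'n^'m) + B) = transpose A + transpose B"
  by (simp add: transpose_def vec_eq_iff)
lemma tr_diff: "transpose ((A::real^'n^'m) - B) = transpose A - transpose B"
  by (simp add: transpose_def vec_eq_iff)

lemma minv: assumes "invertible (A::real^'n^'n)"
  shows "A ** matrix_inv A = mat 1" "matrix_inv A ** A = mat 1"
proof -
  have "\<exists>A'. A ** A' = mat 1 \<and> A' ** A = mat 1" using assms invertible_def by blast
  hence "A ** matrix_inv A = mat 1 \<and> matrix_inv A ** A = mat 1"
    unfolding matrix_inv_def by (rule someI_ex)
  thus "A ** matrix_inv A = mat 1" "matrix_inv A ** A = mat 1" by auto
qed

lemma minv_sym: assumes "invertible (A::real^'n^'n)" "transpose A = A"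
  shows "transpose (matrix_inv A) = matrix_inv A"
proof -
  have "transpose (matrix_inv A ** A) = mat 1" using minv(2)[OF assms(1)] by simp
  hence e: "A ** transpose (matrix_inv A) = mat 1" using assms(2) by (simp add: matrix_transpose_mul)
  have "transpose (matrix_inv A) = (matrix_inv A ** A) ** transpose (matrix_inv A)"
    using minv(2)[OF assms(1)] by simp
  also have "\<dots> = matrix_inv A" by (simp add: e flip: matrix_mul_assoc)
  finally show ?thesis .
qed

lemma inner_tr: "(x::real^'n) \<bullet> ((A::real^'m^'n) *v y) = (transpose A *v x) \<bullet> y"
  by (simp add: dot_lmul_matrix)

lemma pd_invertible: assumes "pd (H::real^'n^'n)" shows "invertible H"
proof -
  have "\<forall>x. H *v x = 0 \<longrightarrow> x = 0"
    using assms unfolding pd_def by (metis inner_zero_right order_less_irrefl)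
  hence "\<exists>B. B ** H = mat 1" using matrix_left_invertible_ker by blast
  thus ?thesis using invertible_left_inverse by blast
qed

lemma sum_plus_UNIV: "sum (f::('a::finite + 'b::finite) \<Rightarrow> real) UNIV = sum (\<lambda>k. f (Inl k)) UNIV + sum (\<lambda>k. f (Inr k)) UNIV"
  by (subst UNIV_Plus_UNIV[symmetric], subst sum.Plus) (auto simp: o_def)

lemma hcat_block: "hcat P Q ** block2 M11 M12 M21 M22 = hcat (P ** M11 + Q ** M21) (P ** M12 + Q ** M22)"
  by (simp add: hcat_def block2_def matrix_matrix_mult_def vec_eq_iff sum_plus_UNIV split: sum.split)

lemma hcat_tr: "hcat P Q ** transpose (hcat P' Q') = P ** transpose P' + Q ** transpose Q'"
  by (simp add: hcat_def transpose_def matrix_matrix_mult_def vec_eq_iff sum_plus_UNIV)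

lemma block_form:
  fixes z :: "real^('r::finite+'r)"
  defines "x \<equiv> (\<chi> k. z $ Inl k)" and "y \<equiv> (\<chi> k. z $ Inr k)"
  shows "z \<bullet> (block2 M11 M12 M21 M22 *v z) = x \<bullet> (M11 *v x) + x \<bullet> (M12 *v y) + y \<bullet> (M21 *v x) + y \<bullet> (M22 *v y)"
  by (simp add: x_def y_def block2_def inner_vec_def matrix_vector_mult_def sum_plus_UNIV
      sum_distrib_left algebra_simps sum.distrib)

lemmas msimps = mm_radd mm_rdiff mm_ldiff mm_rscale mm_lscale matrix_add_ldistrib tr_add tr_diff
   transpose_scalar matrix_transpose_mul transpose_transpose matrix_mul_assoc scaleR_scaleR
   scaleR_add_right scaleR_diff_right

lemma main_id:
  fixes A E X1 X2 :: "real^'d^'d"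
    and B :: "real^'p^'d" and C :: "real^'d^'q" and H :: "real^'p^'p"
    and R1 R2 V2 :: "real^'r^'d" and T Y2 :: "real^'r^'r"
    and \<sigma>1 \<gamma>1 \<gamma>2 s :: real
  assumes Hs: "transpose (matrix_inv H) = matrix_inv H"
    and X1s: "transpose X1 = X1"
    and Ts: "transpose T = T"
    and Yis: "transpose (matrix_inv Y2) = matrix_inv Y2"
    and YYi: "Y2 ** matrix_inv Y2 = mat 1"
    and YiY: "matrix_inv Y2 ** Y2 = mat 1"
    and res1: "riccati A E B C H X1 = R1 ** T ** transpose R1"
    and shift: "\<sigma>1 < 0"
    and ss: "s * s = - 2 * \<sigma>1"
    and FV: "(transpose A - transpose E ** X1 ** B ** matrix_inv H ** transpose B
                            + \<sigma>1 *\<^sub>R transpose E) ** V2 = s *\<^sub>R (R1 ** T)"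
    and Y2_def: "Y2 = T - (1 / (2 * \<sigma>1)) *\<^sub>R
                   ((transpose V2 ** B) ** matrix_inv H ** transpose (transpose V2 ** B))"
    and X2_def: "X2 = X1 + V2 ** matrix_inv Y2 ** transpose V2"
    and R2_def: "R2 = R1 + s *\<^sub>R (transpose E ** V2 ** matrix_inv Y2)"
    and sum1: "\<gamma>1 + \<gamma>2 = 1"
  shows "riccati A E B C H (\<gamma>1 *\<^sub>R X1 + \<gamma>2 *\<^sub>R X2) =
    hcat R1 R2 ** block2 (\<gamma>1\<^sup>2 *\<^sub>R T + (\<gamma>1 * \<gamma>2) *\<^sub>R Y2) ((\<gamma>1 * \<gamma>2) *\<^sub>R (T - Y2))
                         ((\<gamma>1 * \<gamma>2) *\<^sub>R (T - Y2)) (\<gamma>2\<^sup>2 *\<^sub>R T + (\<gamma>1 * \<gamma>2) *\<^sub>R Y2) ** transpose (hcat R1 R2)"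
proof -
  let ?Yi = "matrix_inv Y2"
  let ?Hi = "matrix_inv H"
  have c1: "\<And>X::real^'r^'k. X ** Y2 ** ?Yi = X" by (simp add: YYi flip: matrix_mul_assoc)
  have c2: "\<And>X::real^'r^'k. X ** ?Yi ** Y2 = X" by (simp add: YiY flip: matrix_mul_assoc)
  have N: "transpose V2 ** B ** ?Hi ** transpose B ** V2 = (2 * \<sigma>1) *\<^sub>R (T - Y2)"
  proof -
    have "(1 / (2 * \<sigma>1)) *\<^sub>R (transpose V2 ** B ** ?Hi ** transpose B ** V2) = T - Y2"
      using Y2_def by (simp add: msimps)
    hence "(2 * \<sigma>1) *\<^sub>R ((1 / (2 * \<sigma>1)) *\<^sub>R (transpose V2 ** B ** ?Hi ** transpose B ** V2)) = (2 * \<sigma>1) *\<^sub>R (T - Y2)"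
      by simp
    thus ?thesis using shift by simp
  qed
  have r1: "(transpose A - transpose E ** X1 ** B ** matrix_inv H ** transpose B
                            + \<sigma>1 *\<^sub>R transpose E) ** V2 ** ?Yi ** transpose V2 ** E
         = s *\<^sub>R (R1 ** T) ** ?Yi ** transpose V2 ** E" using FV by simp
  have r2: "transpose E ** V2 ** ?Yi ** transpose ((transpose A - transpose E ** X1 ** B ** matrix_inv H ** transpose B
                            + \<sigma>1 *\<^sub>R transpose E) ** V2)
         = transpose E ** V2 ** ?Yi ** transpose (s *\<^sub>R (R1 ** T))" using FV by simp
  have r3: "transpose E ** V2 ** ?Yi ** (transpose V2 ** B ** ?Hi ** transpose B ** V2) ** ?Yi ** transpose V2 ** E
        = transpose E ** V2 ** ?Yi ** ((2 * \<sigma>1) *\<^sub>R (T - Y2)) ** ?Yi ** transpose V2 ** E"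
    using N by simp
  show ?thesis
    apply (rule vec_eq_iff[THEN iffD2], rule allI, rule vec_eq_iff[THEN iffD2], rule allI)
    subgoal for i j
      using arg_cong[OF r1, of "\<lambda>M. M $ i $ j"] arg_cong[OF r2, of "\<lambda>M. M $ i $ j"]
        arg_cong[OF r3, of "\<lambda>M. M $ i $ j"] arg_cong[OF res1, of "\<lambda>M. M $ i $ j"]
      apply (simp (no_asm_use) add: X2_def R2_def riccati_def hcat_block hcat_tr msimps Hs X1s Ts Yis c1 c2)
      using ss sum1 by algebra
    done
qed

lemma sym_inner: "transpose (T::real^'n^'n) = T \<Longrightarrow> y \<bullet> (T *v x) = x \<bullet> (T *v y)"
  by (metis inner_commute inner_tr)

lemma psd_congr: assumes "psd (M::real^'n^'n)" shows "psd ((G::real^'n^'m) ** M ** transpose G)"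
proof -
  have s: "transpose M = M" using assms by (simp add: psd_def sym_mat_def)
  have "transpose (G ** M ** transpose G) = G ** M ** transpose G"
    by (simp add: matrix_transpose_mul s matrix_mul_assoc)
  moreover have "0 \<le> x \<bullet> ((G ** M ** transpose G) *v x)" for x
  proof -
    have "x \<bullet> ((G ** M ** transpose G) *v x) = (transpose G *v x) \<bullet> (M *v (transpose G *v x))"
      by (simp add: inner_tr matrix_vector_mul_assoc[symmetric] del: transpose_matrix_vector)
    thus ?thesis using assms by (simp add: psd_def)
  qed
  ultimately show ?thesis by (simp add: psd_def sym_mat_def)
qed

lemma block_sym: assumes "transpose M11 = M11" "transpose M22 = M22" "transpose M12 = M12"
  shows "sym_mat (block2 (M11::real^'r::finite^'r) M12 M12 M22)"
proof -
  have "M11 $ i $ j = M11 $ j $ i" "M22 $ i $ j = M22 $ j $ i" "M12 $ i $ j = M12 $ j $ i" for i j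
    using assms by (metis transpose_def vec_lambda_beta)+
  thus ?thesis by (auto simp: sym_mat_def transpose_def block2_def vec_eq_iff split: sum.split)
qed

lemma H2_form:
  fixes z :: "real^('r::finite+'r)" and T Y :: "real^'r^'r"
  assumes Ts: "transpose T = T" and Ys: "transpose Y = Y"
  defines "x \<equiv> (\<chi> k. z $ Inl k)" and "y \<equiv> (\<chi> k. z $ Inr k)"
  shows "z \<bullet> (block2 (a\<^sup>2 *\<^sub>R T + (a * b) *\<^sub>R Y) ((a * b) *\<^sub>R (T - Y))
                         ((a * b) *\<^sub>R (T - Y)) (b\<^sup>2 *\<^sub>R T + (a * b) *\<^sub>R Y) *v z)
     = (a *\<^sub>R x + b *\<^sub>R y) \<bullet> (T *v (a *\<^sub>R x + b *\<^sub>R y)) + (a * b) * ((x - y) \<bullet> (Y *v (x - y)))"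
proof -
  have e1: "y \<bullet> (T *v x) = x \<bullet> (T *v y)" "y \<bullet> (Y *v x) = x \<bullet> (Y *v y)"
    using sym_inner Ts Ys by blast+
  show ?thesis
    unfolding block_form x_def[symmetric] y_def[symmetric]
    using e1 by (simp add: scaleR_matrix_vector_assoc[symmetric] algebra_simps inner_add_left inner_add_right inner_diff_left inner_diff_right power2_eq_square)
qed

theorem theorem3:
  fixes A E X1 X2 :: "real^'d^'d"
    and B :: "real^'p^'d" and C :: "real^'d^'q" and H :: "real^'p^'p"
    and R1 R2 V2 :: "real^'r^'d" and T Y2 :: "real^'r^'r"
    and \<sigma>1 \<gamma>1 \<gamma>2 :: real
  assumes H_pd: "pd H"
    and X1_sym: "sym_mat X1"
    and T_psd: "psd T"
    and res1: "riccati A E B C H X1 = R1 ** T ** transpose R1"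
    and shift: "\<sigma>1 < 0"
    and inv_F: "invertible (transpose A - transpose E ** X1 ** B ** matrix_inv H ** transpose B
                            + \<sigma>1 *\<^sub>R transpose E)"
    and V2_def: "V2 = sqrt (-2 * \<sigma>1) *\<^sub>R
                   (matrix_inv (transpose A - transpose E ** X1 ** B ** matrix_inv H ** transpose B
                                + \<sigma>1 *\<^sub>R transpose E) ** R1 ** T)"
    and Y2_def: "Y2 = T - (1 / (2 * \<sigma>1)) *\<^sub>R
                   ((transpose V2 ** B) ** matrix_inv H ** transpose (transpose V2 ** B))"
    and inv_Y2: "invertible Y2"
    and X2_def: "X2 = X1 + V2 ** matrix_inv Y2 ** transpose V2"
    and R2_def: "R2 = R1 + sqrt (-2 * \<sigma>1) *\<^sub>R (transpose E ** V2 ** matrix_inv Y2)"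
    and sum1: "\<gamma>1 + \<gamma>2 = 1"
  shows "let H2 = block2 (\<gamma>1\<^sup>2 *\<^sub>R T + (\<gamma>1 * \<gamma>2) *\<^sub>R Y2) ((\<gamma>1 * \<gamma>2) *\<^sub>R (T - Y2))
                         ((\<gamma>1 * \<gamma>2) *\<^sub>R (T - Y2)) (\<gamma>2\<^sup>2 *\<^sub>R T + (\<gamma>1 * \<gamma>2) *\<^sub>R Y2);
             Res = riccati A E B C H (\<gamma>1 *\<^sub>R X1 + \<gamma>2 *\<^sub>R X2)
         in Res = hcat R1 R2 ** H2 ** transpose (hcat R1 R2)
            \<and> (psd H2 \<longleftrightarrow> (0 \<le> \<gamma>1 \<and> \<gamma>1 \<le> 1 \<and> 0 \<le> \<gamma>2 \<and> \<gamma>2 \<le> 1))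
            \<and> ((0 \<le> \<gamma>1 \<and> \<gamma>1 \<le> 1 \<and> 0 \<le> \<gamma>2 \<and> \<gamma>2 \<le> 1) \<longrightarrow> psd Res)"
proof -
  define F where "F = transpose A - transpose E ** X1 ** B ** matrix_inv H ** transpose B
                            + \<sigma>1 *\<^sub>R transpose E"
  define s where "s = sqrt (-2 * \<sigma>1)"
  define Hi where "Hi = matrix_inv H"
  define Yi where "Yi = matrix_inv Y2"
  define H2 where "H2 = block2 (\<gamma>1\<^sup>2 *\<^sub>R T + (\<gamma>1 * \<gamma>2) *\<^sub>R Y2) ((\<gamma>1 * \<gamma>2) *\<^sub>R (T - Y2))
                         ((\<gamma>1 * \<gamma>2) *\<^sub>R (T - Y2)) (\<gamma>2\<^sup>2 *\<^sub>R T + (\<gamma>1 * \<gamma>2) *\<^sub>R Y2)"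
  define Res where "Res = riccati A E B C H (\<gamma>1 *\<^sub>R X1 + \<gamma>2 *\<^sub>R X2)"
  have Hinv: "invertible H" using H_pd pd_invertible by blast
  have Hsym: "transpose H = H" using H_pd by (simp add: pd_def sym_mat_def)
  have Hs: "transpose Hi = Hi" unfolding Hi_def using minv_sym[OF Hinv Hsym] .
  have X1s: "transpose X1 = X1" using X1_sym by (simp add: sym_mat_def)
  have Ts: "transpose T = T" using T_psd by (simp add: psd_def sym_mat_def)
  have Ys: "transpose Y2 = Y2"
    unfolding Y2_def using Hs Ts by (simp add: Hi_def[symmetric] msimps)
  have Yis: "transpose Yi = Yi" unfolding Yi_def using minv_sym[OF inv_Y2 Ys] .
  have YYi: "Y2 ** Yi = mat 1" and YiY: "Yi ** Y2 = mat 1" unfolding Yi_def using minv[OF inv_Y2] by auto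
  have ss: "s * s = - 2 * \<sigma>1" unfolding s_def using shift by simp
  have FV: "F ** V2 = s *\<^sub>R (R1 ** T)"
  proof -
    have "F ** V2 = s *\<^sub>R ((F ** matrix_inv F) ** R1 ** T)"
      unfolding V2_def F_def[symmetric] s_def[symmetric] by (simp add: mm_lscale matrix_mul_assoc)
    thus ?thesis using minv(1)[OF inv_F[folded F_def]] by simp
  qed
  have P1: "Res = hcat R1 R2 ** H2 ** transpose (hcat R1 R2)"
    unfolding Res_def H2_def
    by (rule main_id[OF Hs[unfolded Hi_def] X1s Ts Yis[unfolded Yi_def] YYi[unfolded Yi_def]
          YiY[unfolded Yi_def] res1 shift ss FV[unfolded F_def] Y2_def X2_def R2_def[folded s_def] sum1])
  have Hipsd: "0 \<le> w \<bullet> (Hi *v w)" for w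
  proof -
    have "H *v (Hi *v w) = w" using minv(1)[OF Hinv] by (simp add: Hi_def matrix_vector_mul_assoc)
    hence "w \<bullet> (Hi *v w) = (H *v (Hi *v w)) \<bullet> (Hi *v w)" by simp
    also have "\<dots> = (Hi *v w) \<bullet> (H *v (Hi *v w))" by (simp add: inner_commute)
    moreover have "0 \<le> u \<bullet> (H *v u)" for u
      using H_pd unfolding pd_def by (cases "u = 0") (auto simp: less_imp_le)
    ultimately show ?thesis by simp
  qed
  have Ypsd: "0 \<le> z \<bullet> (Y2 *v z)" for z
  proof -
    let ?M = "transpose V2 ** B"
    have "z \<bullet> (Y2 *v z) = z \<bullet> (T *v z) + (- (1 / (2 * \<sigma>1))) * ((transpose ?M *v z) \<bullet> (Hi *v (transpose ?M *v z)))"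
      unfolding Y2_def Hi_def[symmetric]
      by (simp add: matrix_vector_mult_diff_rdistrib scaleR_matrix_vector_assoc[symmetric] inner_diff_right
          inner_tr matrix_vector_mul_assoc[symmetric] matrix_transpose_mul Hs del: transpose_matrix_vector)
    moreover have "0 \<le> z \<bullet> (T *v z)" using T_psd by (simp add: psd_def)
    moreover have "0 \<le> - (1 / (2 * \<sigma>1))" using shift by (simp add: divide_simps)
    ultimately show ?thesis using Hipsd[of "transpose ?M *v z"]
      by (simp only:) (intro add_nonneg_nonneg mult_nonneg_nonneg)
  qed
  have Ypos: "\<exists>w. 0 < w \<bullet> (Y2 *v w)"
  proof (rule ccontr)
    assume "\<not> ?thesis"
    hence z0: "\<And>w. w \<bullet> (Y2 *v w) = 0" using Ypsd by (meson not_less order_antisym)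
    have "x \<bullet> (Y2 *v y) = 0" for x y
    proof -
      have "(x + y) \<bullet> (Y2 *v (x + y)) = 0" by (rule z0)
      hence "x \<bullet> (Y2 *v y) + y \<bullet> (Y2 *v x) = 0"
        using z0[of x] z0[of y] by (simp add: matrix_vector_right_distrib inner_add_left inner_add_right)
      thus ?thesis using sym_inner[OF Ys, of y x] by simp
    qed
    hence Y0: "Y2 *v y = 0" for y using inner_eq_zero_iff by metis
    have "(1::real^'r) = (Y2 ** Yi) *v 1" using YYi by simp
    also have "\<dots> = 0" by (simp add: Y0 flip: matrix_vector_mul_assoc)
    finally show False by (simp add: vec_eq_iff)
  qed
  have P2: "psd H2 \<longleftrightarrow> (0 \<le> \<gamma>1 \<and> \<gamma>1 \<le> 1 \<and> 0 \<le> \<gamma>2 \<and> \<gamma>2 \<le> 1)"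
  proof
    assume p: "psd H2"
    show "0 \<le> \<gamma>1 \<and> \<gamma>1 \<le> 1 \<and> 0 \<le> \<gamma>2 \<and> \<gamma>2 \<le> 1"
    proof (rule ccontr)
      assume "\<not> ?thesis"
      hence "\<gamma>1 < 0 \<and> 0 < \<gamma>2 \<or> 0 < \<gamma>1 \<and> \<gamma>2 < 0" using sum1 by linarith
      hence g: "\<gamma>1 * \<gamma>2 < 0" using mult_neg_pos mult_pos_neg by blast
      obtain w where w: "0 < w \<bullet> (Y2 *v w)" using Ypos by blast
      define z :: "real^('r+'r)" where "z = (\<chi> k. case k of Inl i \<Rightarrow> \<gamma>2 * w $ i | Inr i \<Rightarrow> - \<gamma>1 * w $ i)"
      have x: "(\<chi> k. z $ Inl k) = \<gamma>2 *\<^sub>R w" and y: "(\<chi> k. z $ Inr k) = (-\<gamma>1) *\<^sub>R w"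
        by (simp_all add: z_def vec_eq_iff)
      have u: "\<gamma>1 *\<^sub>R (\<gamma>2 *\<^sub>R w) + \<gamma>2 *\<^sub>R ((-\<gamma>1) *\<^sub>R w) = 0" by (simp add: algebra_simps)
      have v: "\<gamma>2 *\<^sub>R w - (-\<gamma>1) *\<^sub>R w = w" using sum1 by (simp add: algebra_simps flip: scaleR_add_left)
      have "z \<bullet> (H2 *v z) = (\<gamma>1 * \<gamma>2) * (w \<bullet> (Y2 *v w))"
        unfolding H2_def H2_form[OF Ts Ys] x y u v by simp
      also have "\<dots> < 0" using g w by (simp add: mult_neg_pos)
      finally have "z \<bullet> (H2 *v z) < 0" .
      moreover have "0 \<le> z \<bullet> (H2 *v z)" using p by (simp add: psd_def)
      ultimately show False by linarith
    qed
  next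
    assume r: "0 \<le> \<gamma>1 \<and> \<gamma>1 \<le> 1 \<and> 0 \<le> \<gamma>2 \<and> \<gamma>2 \<le> 1"
    have sym: "sym_mat H2" unfolding H2_def
      by (rule block_sym) (simp_all add: tr_add tr_diff transpose_scalar Ts Ys)
    have "0 \<le> z \<bullet> (H2 *v z)" for z
    proof -
      have "0 \<le> \<gamma>1 * \<gamma>2" using r by simp
      thus ?thesis unfolding H2_def H2_form[OF Ts Ys]
        using T_psd Ypsd by (simp add: psd_def)
    qed
    thus "psd H2" using sym by (simp add: psd_def)
  qed
  have P3: "(0 \<le> \<gamma>1 \<and> \<gamma>1 \<le> 1 \<and> 0 \<le> \<gamma>2 \<and> \<gamma>2 \<le> 1) \<longrightarrow> psd Res"
  proof
    assume "0 \<le> \<gamma>1 \<and> \<gamma>1 \<le> 1 \<and> 0 \<le> \<gamma>2 \<and> \<gamma>2 \<le> 1"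
    hence "psd H2" using P2 by blast
    thus "psd Res" unfolding P1 by (rule psd_congr)
  qed
  show ?thesis unfolding Let_def H2_def[symmetric] Res_def[symmetric] using P1 P2 P3 by blast
qed

end
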